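(* Let $m,n\ge1$. For every instance $(Q,c,d)$ of BQAP1, the set $\mathcal{G}_1=\{(x,y)\text{ feasible for BQAP1}: f_1(x,y)\ge \mathcal{A}_1(Q,c,d)\}$ satisfies $|\mathcal{G}_1|\ge n^{m-1}m^{n-1}$. For every instance $(Q,c,d)$ of BQAP2, the set $\mathcal{G}_2=\{(x,y)\text{ feasible for BQAP2}: f_2(x,y)\ge \mathcal{A}_2(Q,c,d)\}$ satisfies $|\mathcal{G}_2|\ge m^{m-1}n^{n-1}$.
   Context: $M=\{1,\dots,m\}$, $N=\{1,\dots,n\}$. BQAP1: data $Q=(q_{ijk\ell})$ ($m\times n\times m\times n$ real array), real $m\times n$ matrices $c,d$; feasible solutions are pairs $(x,y)$ of $m\times n$ 0-1 matrices with $\sum_{j=1}^n x_{ij}=1$ for all $i\in M$ and $\sum_{i=1}^m y_{ij}=1$ for all $j\in N$; objective $f_1(x,y)=\sum_{i,k\in M}\sum_{j,\ell\in N} q_{ijk\ell}x_{ij}y_{k\ell}+\sum_{i\in M,j\in N}c_{ij}x_{ij}+\sum_{i\in M,j\in N}d_{ij}y_{ij}$. BQAP2: data $Q$ ($m\times m\times n\times n$ real array), real $m\times m$ matrix $c$, real $n\times n$ matrix $d$; feasible solutions are pairs $(x,y)$ with $x$ an $m\times m$ 0-1 matrix with $\sum_{j=1}^m x_{ij}=1$ for all $i\in M$ and $y$ an $n\times n$ 0-1 matrix with $\sum_{i=1}^n y_{ij}=1$ for all $j\in N$; objective $f_2(x,y)=\sum_{i,j\in M}\sum_{k,\ell\in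 N} q_{ijk\ell}x_{ij}y_{k\ell}+\sum_{i,j\in M}c_{ij}x_{ij}+\sum_{i,j\in N}d_{ij}y_{ij}$. $\mathcal{A}_1(Q,c,d)$ (resp. $\mathcal{A}_2(Q,c,d)$) denotes the arithmetic mean of $f_1$ (resp. $f_2$) over all feasible solutions of BQAP1 (resp. BQAP2). *)

theory Defs
  imports Complex_Main
begin

text \<open>Matrices are functions nat \<Rightarrow> nat \<Rightarrow> real, indices 1-based; entries outside
the index range are fixed to 0 so that the feasible sets are finite sets of matrices.\<close>

definition zero_one_mat :: "nat \<Rightarrow> nat \<Rightarrow> (nat \<Rightarrow> nat \<Rightarrow> real) set" where
  "zero_one_mat r s = {x. (\<forall>i j. x i j \<in> {0, 1}) \<and>
      (\<forall>i j. (i \<notin> {1..r} \<or> j \<notin> {1..s}) \<longrightarrow> x i j = 0)}"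

definition row_assign :: "nat \<Rightarrow> nat \<Rightarrow> (nat \<Rightarrow> nat \<Rightarrow> real) set" where
  "row_assign r s = {x \<in> zero_one_mat r s. \<forall>i\<in>{1..r}. (\<Sum>j=1..s. x i j) = 1}"

definition col_assign :: "nat \<Rightarrow> nat \<Rightarrow> (nat \<Rightarrow> nat \<Rightarrow> real) set" where
  "col_assign r s = {y \<in> zero_one_mat r s. \<forall>j\<in>{1..s}. (\<Sum>i=1..r. y i j) = 1}"

definition feas1 :: "nat \<Rightarrow> nat \<Rightarrow> ((nat \<Rightarrow> nat \<Rightarrow> real) \<times> (nat \<Rightarrow> nat \<Rightarrow> real)) set" where
  "feas1 m n = row_assign m n \<times> col_assign m n"

definition feas2 :: "nat \<Rightarrow> nat \<Rightarrow> ((nat \<Rightarrow> nat \<Rightarrow> real) \<times> (nat \<Rightarrow> nat \<Rightarrow> real)) set" where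
  "feas2 m n = row_assign m m \<times> col_assign n n"

definition f1 :: "nat \<Rightarrow> nat \<Rightarrow> (nat \<Rightarrow> nat \<Rightarrow> nat \<Rightarrow> nat \<Rightarrow> real) \<Rightarrow> (nat \<Rightarrow> nat \<Rightarrow> real)
    \<Rightarrow> (nat \<Rightarrow> nat \<Rightarrow> real) \<Rightarrow> (nat \<Rightarrow> nat \<Rightarrow> real) \<Rightarrow> (nat \<Rightarrow> nat \<Rightarrow> real) \<Rightarrow> real" where
  "f1 m n Q c d x y =
     (\<Sum>i\<in>{1..m}. \<Sum>k\<in>{1..m}. \<Sum>j\<in>{1..n}. \<Sum>l\<in>{1..n}. Q i j k l * x i j * y k l)
     + (\<Sum>i\<in>{1..m}. \<Sum>j\<in>{1..n}. c i j * x i j)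
     + (\<Sum>i\<in>{1..m}. \<Sum>j\<in>{1..n}. d i j * y i j)"

definition f2 :: "nat \<Rightarrow> nat \<Rightarrow> (nat \<Rightarrow> nat \<Rightarrow> nat \<Rightarrow> nat \<Rightarrow> real) \<Rightarrow> (nat \<Rightarrow> nat \<Rightarrow> real)
    \<Rightarrow> (nat \<Rightarrow> nat \<Rightarrow> real) \<Rightarrow> (nat \<Rightarrow> nat \<Rightarrow> real) \<Rightarrow> (nat \<Rightarrow> nat \<Rightarrow> real) \<Rightarrow> real" where
  "f2 m n Q c d x y =
     (\<Sum>i\<in>{1..m}. \<Sum>j\<in>{1..m}. \<Sum>k\<in>{1..n}. \<Sum>l\<in>{1..n}. Q i j k l * x i j * y k l)
     + (\<Sum>i\<in>{1..m}. \<Sum>j\<in>{1..m}. c i j * x i j)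
     + (\<Sum>i\<in>{1..n}. \<Sum>j\<in>{1..n}. d i j * y i j)"

definition A1 where
  "A1 m n Q c d = (\<Sum>(x, y)\<in>feas1 m n. f1 m n Q c d x y) / real (card (feas1 m n))"

definition A2 where
  "A2 m n Q c d = (\<Sum>(x, y)\<in>feas2 m n. f2 m n Q c d x y) / real (card (feas2 m n))"

end

theory Submission
  imports Defs "HOL-Library.FuncSet"
begin


lemma abstract_count:
  fixes F :: "'a set" and T :: "'b set" and \<phi> :: "'b \<Rightarrow> 'a \<Rightarrow> 'a" and h :: "'a \<Rightarrow> real"
  assumes fF: "finite F" and neF: "F \<noteq> {}" and fT: "finite T" and neT: "T \<noteq> {}"
    and bij: "\<And>t. t \<in> T \<Longrightarrow> bij_betw (\<phi> t) F F"
    and orb: "\<And>p. p \<in> F \<Longrightarrow> (\<Sum>t\<in>T. h (\<phi> t p)) = C"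
  shows "card F \<le> card T * card {p\<in>F. h p \<ge> (\<Sum>p\<in>F. h p) / card F}"
proof -
  have S: "(\<Sum>p\<in>F. u (\<phi> t p)) = (\<Sum>p\<in>F. u p)" if "t \<in> T" for t and u :: "'a \<Rightarrow> 'c::comm_monoid_add"
    using sum.reindex_bij_betw[OF bij[OF that], of u] by simp
  have "real (card T) * (\<Sum>p\<in>F. h p) = (\<Sum>t\<in>T. \<Sum>p\<in>F. h (\<phi> t p))"
    by (simp add: S sum_distrib_left)
  also have "\<dots> = (\<Sum>p\<in>F. \<Sum>t\<in>T. h (\<phi> t p))" by (rule sum.swap)
  also have "\<dots> = real (card F) * C" using orb by simp
  finally have tot: "real (card T) * (\<Sum>p\<in>F. h p) = real (card F) * C" .
  have cF: "card F > 0" using fF neF by (simp add: card_gt_0_iff)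
  have cT: "card T > 0" using fT neT by (simp add: card_gt_0_iff)
  define A where "A = (\<Sum>p\<in>F. h p) / card F"
  have A: "A = C / card T" using tot cF cT unfolding A_def by (simp add: field_simps)
  define G where "G = {p\<in>F. h p \<ge> A}"
  have GF: "G \<subseteq> F" unfolding G_def by auto
  have ex: "\<exists>t\<in>T. \<phi> t p \<in> G" if p: "p \<in> F" for p
  proof (rule ccontr)
    assume nt: "\<not> ?thesis"
    have lt: "h (\<phi> t p) < A" if t: "t \<in> T" for t
    proof -
      have "\<phi> t p \<in> F" using bij_betw_apply[OF bij[OF t] p] .
      thus ?thesis using nt t unfolding G_def by force
    qed
    have "(\<Sum>t\<in>T. h (\<phi> t p)) < (\<Sum>t\<in>T. A)"
      by (rule sum_strict_mono[OF fT neT lt])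
    also have "\<dots> = C" using A cT by simp
    finally show False using orb[OF p] by simp
  qed
  have one: "1 \<le> (\<Sum>t\<in>T. if \<phi> t p \<in> G then 1 else (0::nat))" if p: "p \<in> F" for p
  proof -
    obtain t where t: "t \<in> T" "\<phi> t p \<in> G" using ex[OF p] by blast
    have "(if \<phi> t p \<in> G then 1 else (0::nat)) \<le> (\<Sum>t\<in>T. if \<phi> t p \<in> G then 1 else (0::nat))"
      by (rule member_le_sum[OF t(1)]) (auto simp: fT)
    thus ?thesis using t by simp
  qed
  have "card F = (\<Sum>p\<in>F. (1::nat))" by simp
  also have "\<dots> \<le> (\<Sum>p\<in>F. \<Sum>t\<in>T. if \<phi> t p \<in> G then 1 else (0::nat))"
    by (rule sum_mono) (rule one)
  also have "\<dots> = (\<Sum>t\<in>T. \<Sum>p\<in>F. if \<phi> t p \<in> G then 1 else (0::nat))" by (rule sum.swap)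
  also have "\<dots> = (\<Sum>t\<in>T. \<Sum>p\<in>F. if p \<in> G then 1 else (0::nat))"
    by (rule sum.cong[OF refl]) (rule S[of _ "\<lambda>q. if q \<in> G then 1 else (0::nat)"])
  also have "\<dots> = (\<Sum>t\<in>T. card G)"
    using GF fF by (simp add: sum.If_cases Int_absorb1 Int_commute)
  also have "\<dots> = card T * card G" by simp
  finally show ?thesis unfolding G_def A_def .
qed



definition sh :: "nat \<Rightarrow> nat \<Rightarrow> nat \<Rightarrow> nat" where
  "sh q a j = (if j \<in> {1..q} then (j - 1 + a) mod q + 1 else j)"

lemma mod_add_cancel_nat: "((x::nat) + a) mod q = (y + a) mod q \<Longrightarrow> x mod q = y mod q"
  by (auto simp: nat_mod_eq_iff)

lemma sh_range: assumes "q \<ge> 1" "j \<in> {1..q}" shows "sh q a j \<in> {1..q}"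
proof -
  have "(j - 1 + a) mod q < q" using assms(1) by simp
  moreover have "sh q a j = (j - 1 + a) mod q + 1" using assms(2) by (simp only: sh_def if_True)
  ultimately show ?thesis by simp
qed

lemma sh_bij: assumes "q \<ge> 1" shows "bij_betw (sh q a) {1..q} {1..q}"
proof -
  have inj: "inj_on (sh q a) {1..q}"
  proof (rule inj_onI)
    fix j j' assume j: "j \<in> {1..q}" and j': "j' \<in> {1..q}" and e: "sh q a j = sh q a j'"
    hence "(j - 1 + a) mod q = (j' - 1 + a) mod q" by (simp add: sh_def)
    hence "(j - 1) mod q = (j' - 1) mod q" by (rule mod_add_cancel_nat)
    moreover have "(j - 1) mod q = j - 1" "(j' - 1) mod q = j' - 1" using j j' by (auto intro!: mod_less)
    ultimately have "j - 1 = j' - 1" by simp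
    thus "j = j'" using j j' by (simp only: atLeastAtMost_iff) arith
  qed
  have im: "sh q a ` {1..q} \<subseteq> {1..q}" using sh_range[OF assms] by auto
  show ?thesis using inj im by (simp add: bij_betw_def endo_inj_surj)
qed

lemma sh_bij2: assumes "q \<ge> 1" and j: "j \<in> {1..q}" shows "bij_betw (\<lambda>a. sh q a j) {0..<q} {1..q}"
proof -
  have inj: "inj_on (\<lambda>a. sh q a j) {0..<q}"
  proof (rule inj_onI)
    fix a a' assume a: "a \<in> {0..<q}" and a': "a' \<in> {0..<q}" and e: "sh q a j = sh q a' j"
    hence "(a + (j - 1)) mod q = (a' + (j - 1)) mod q" using j by (simp add: sh_def add.commute)
    hence "a mod q = a' mod q" by (rule mod_add_cancel_nat)
    thus "a = a'" using a a' by simp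
  qed
  have im: "(\<lambda>a. sh q a j) ` {0..<q} \<subseteq> {1..q}" using sh_range[OF assms] by auto
  have c: "card ((\<lambda>a. sh q a j) ` {0..<q}) = card {1..q}" using card_image[OF inj] by simp
  have "(\<lambda>a. sh q a j) ` {0..<q} = {1..q}" by (rule card_subset_eq[OF _ im c]) simp
  thus ?thesis using inj by (simp add: bij_betw_def)
qed

lemma sh_surj: assumes "q \<ge> 1" shows "\<exists>j0. sh q a j0 = j"
proof (cases "j \<in> {1..q}")
  case True then show ?thesis using sh_bij[OF assms, of a] unfolding bij_betw_def by (metis imageE)
next
  case False then show ?thesis by (auto simp: sh_def)
qed



definition Sx :: "nat \<Rightarrow> nat \<Rightarrow> (nat \<Rightarrow> nat \<Rightarrow> real) \<Rightarrow> (nat \<Rightarrow> nat \<Rightarrow> real)" where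
  "Sx q a x = (\<lambda>i j. x i (sh q a j))"
definition Sy :: "nat \<Rightarrow> nat \<Rightarrow> (nat \<Rightarrow> nat \<Rightarrow> real) \<Rightarrow> (nat \<Rightarrow> nat \<Rightarrow> real)" where
  "Sy r b y = (\<lambda>k l. y (sh r b k) l)"

lemma sh_out: "j \<notin> {1..q} \<Longrightarrow> sh q a j = j" unfolding sh_def by (rule if_not_P)

lemma Sx_row: assumes q: "q \<ge> 1" and x: "x \<in> row_assign p q" shows "Sx q a x \<in> row_assign p q"
proof -
  have zo: "\<And>i j. x i j \<in> {0,1}" and out: "\<And>i j. i \<notin> {1..p} \<or> j \<notin> {1..q} \<Longrightarrow> x i j = 0"
    and rs: "\<And>i. i \<in> {1..p} \<Longrightarrow> (\<Sum>j=1..q. x i j) = 1"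
    using x unfolding row_assign_def zero_one_mat_def by auto
  have "(\<Sum>j=1..q. x i (sh q a j)) = 1" if "i \<in> {1..p}" for i
    using sum.reindex_bij_betw[OF sh_bij[OF q, of a], of "x i"] rs[OF that] by simp
  moreover have "x i (sh q a j) = 0" if "i \<notin> {1..p} \<or> j \<notin> {1..q}" for i j
    using that out sh_out by metis
  ultimately show ?thesis using zo unfolding row_assign_def zero_one_mat_def Sx_def by auto
qed

lemma Sy_col: assumes r: "r \<ge> 1" and y: "y \<in> col_assign r s" shows "Sy r b y \<in> col_assign r s"
proof -
  have zo: "\<And>i j. y i j \<in> {0,1}" and out: "\<And>i j. i \<notin> {1..r} \<or> j \<notin> {1..s} \<Longrightarrow> y i j = 0"
    and cs: "\<And>j. j \<in> {1..s} \<Longrightarrow> (\<Sum>i=1..r. y i j) = 1"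
    using y unfolding col_assign_def zero_one_mat_def by auto
  have "(\<Sum>k=1..r. y (sh r b k) l) = 1" if "l \<in> {1..s}" for l
    using sum.reindex_bij_betw[OF sh_bij[OF r, of b], of "\<lambda>k. y k l"] cs[OF that] by simp
  moreover have "y (sh r b k) l = 0" if "k \<notin> {1..r} \<or> l \<notin> {1..s}" for k l
    using that out sh_out by metis
  ultimately show ?thesis using zo unfolding col_assign_def zero_one_mat_def Sy_def by auto
qed

lemma Sx_inj: assumes q: "q \<ge> 1" shows "inj (Sx q a)"
proof (rule injI)
  fix x x' assume e: "Sx q a x = Sx q a x'"
  show "x = x'"
  proof (intro ext)
    fix i j
    obtain j0 where "sh q a j0 = j" using sh_surj[OF q] by blast
    thus "x i j = x' i j" using fun_cong[OF fun_cong[OF e, of i], of j0] by (simp add: Sx_def)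
  qed
qed

lemma Sy_inj: assumes r: "r \<ge> 1" shows "inj (Sy r b)"
proof (rule injI)
  fix y y' assume e: "Sy r b y = Sy r b y'"
  show "y = y'"
  proof (intro ext)
    fix k l
    obtain k0 where "sh r b k0 = k" using sh_surj[OF r] by blast
    thus "y k l = y' k l" using fun_cong[OF fun_cong[OF e, of k0], of l] by (simp add: Sy_def)
  qed
qed

lemma finite_zo: "finite (zero_one_mat r s)"
proof -
  have "zero_one_mat r s \<subseteq> (\<lambda>S i j. if (i, j) \<in> S then 1 else 0) ` Pow ({1..r} \<times> {1..s})"
  proof
    fix x assume x: "x \<in> zero_one_mat r s"
    let ?S = "{(i, j). i \<in> {1..r} \<and> j \<in> {1..s} \<and> x i j = 1}"
    have "x = (\<lambda>i j. if (i, j) \<in> ?S then 1 else 0)"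
    proof (intro ext)
      fix i j
      show "x i j = (if (i, j) \<in> ?S then 1 else 0)"
        using x unfolding zero_one_mat_def by (cases "i \<in> {1..r} \<and> j \<in> {1..s}") auto
    qed
    moreover have "?S \<in> Pow ({1..r} \<times> {1..s})" by auto
    ultimately show "x \<in> (\<lambda>S i j. if (i, j) \<in> S then 1 else 0) ` Pow ({1..r} \<times> {1..s})" by blast
  qed
  thus ?thesis by (rule finite_subset) simp
qed

lemma finite_row: "finite (row_assign p q)"
  using finite_zo unfolding row_assign_def by (rule finite_subset[rotated]) auto
lemma finite_col: "finite (col_assign r s)"
  using finite_zo unfolding col_assign_def by (rule finite_subset[rotated]) auto

lemma Sx_bij: "q \<ge> 1 \<Longrightarrow> bij_betw (Sx q a) (row_assign p q) (row_assign p q)"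
  using Sx_inj[of q a] Sx_row[of q _ p a] finite_row[of p q]
  by (simp add: bij_betw_def endo_inj_surj image_subset_iff inj_on_subset[OF _ subset_UNIV])
lemma Sy_bij: "r \<ge> 1 \<Longrightarrow> bij_betw (Sy r b) (col_assign r s) (col_assign r s)"
  using Sy_inj[of r b] Sy_col[of r _ s b] finite_col[of r s]
  by (simp add: bij_betw_def endo_inj_surj image_subset_iff inj_on_subset[OF _ subset_UNIV])

lemma card_row: assumes "q \<ge> 1" shows "q ^ p \<le> card (row_assign p q)"
proof -
  define emb where "emb = (\<lambda>\<phi> i j. if i \<in> {1..p} \<and> j \<in> {1..q} \<and> \<phi> i = j then 1 else (0::real))"
  have into: "emb \<phi> \<in> row_assign p q" if "\<phi> \<in> {1..p} \<rightarrow>\<^sub>E {1..q}" for \<phi>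
  proof -
    have "(\<Sum>j=1..q. emb \<phi> i j) = 1" if i: "i \<in> {1..p}" for i
    proof -
      have "\<phi> i \<in> {1..q}" using \<open>\<phi> \<in> _\<close> i by auto
      thus ?thesis using i unfolding emb_def by (simp add: sum.delta)
    qed
    thus ?thesis unfolding row_assign_def zero_one_mat_def emb_def by auto
  qed
  have inj: "inj_on emb ({1..p} \<rightarrow>\<^sub>E {1..q})"
  proof (rule inj_onI)
    fix \<phi> \<psi> assume a: "\<phi> \<in> {1..p} \<rightarrow>\<^sub>E {1..q}" and b: "\<psi> \<in> {1..p} \<rightarrow>\<^sub>E {1..q}" and e: "emb \<phi> = emb \<psi>"
    show "\<phi> = \<psi>"
    proof (rule PiE_ext[OF a b])
      fix i assume i: "i \<in> {1..p}"
      have "\<phi> i \<in> {1..q}" using a i by auto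
      hence "emb \<phi> i (\<phi> i) = 1" using i by (simp add: emb_def)
      hence "emb \<psi> i (\<phi> i) = 1" using e by simp
      thus "\<phi> i = \<psi> i" unfolding emb_def by (auto split: if_splits)
    qed
  qed
  have "card ({1..p} \<rightarrow>\<^sub>E {1..q}) = q ^ p" by (simp add: card_PiE)
  moreover have "card ({1..p} \<rightarrow>\<^sub>E {1..q}) \<le> card (row_assign p q)"
    using card_inj_on_le[OF inj _ finite_row] into by blast
  ultimately show ?thesis by simp
qed

lemma card_col: assumes "r \<ge> 1" shows "r ^ s \<le> card (col_assign r s)"
proof -
  define emb where "emb = (\<lambda>\<phi> k l. if l \<in> {1..s} \<and> k \<in> {1..r} \<and> \<phi> l = k then 1 else (0::real))"
  have into: "emb \<phi> \<in> col_assign r s" if "\<phi> \<in> {1..s} \<rightarrow>\<^sub>E {1..r}" for \<phi>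
  proof -
    have "(\<Sum>k=1..r. emb \<phi> k l) = 1" if l: "l \<in> {1..s}" for l
    proof -
      have "\<phi> l \<in> {1..r}" using \<open>\<phi> \<in> _\<close> l by auto
      thus ?thesis using l unfolding emb_def by (simp add: sum.delta')
    qed
    thus ?thesis unfolding col_assign_def zero_one_mat_def emb_def by auto
  qed
  have inj: "inj_on emb ({1..s} \<rightarrow>\<^sub>E {1..r})"
  proof (rule inj_onI)
    fix \<phi> \<psi> assume a: "\<phi> \<in> {1..s} \<rightarrow>\<^sub>E {1..r}" and b: "\<psi> \<in> {1..s} \<rightarrow>\<^sub>E {1..r}" and e: "emb \<phi> = emb \<psi>"
    show "\<phi> = \<psi>"
    proof (rule PiE_ext[OF a b])
      fix l assume l: "l \<in> {1..s}"
      have "\<phi> l \<in> {1..r}" using a l by auto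
      hence "emb \<phi> (\<phi> l) l = 1" using l by (simp add: emb_def)
      hence "emb \<psi> (\<phi> l) l = 1" using e by simp
      thus "\<phi> l = \<psi> l" unfolding emb_def by (auto split: if_splits)
    qed
  qed
  have "card ({1..s} \<rightarrow>\<^sub>E {1..r}) = r ^ s" by (simp add: card_PiE)
  moreover have "card ({1..s} \<rightarrow>\<^sub>E {1..r}) \<le> card (col_assign r s)"
    using card_inj_on_le[OF inj _ finite_col] into by blast
  ultimately show ?thesis by simp
qed



definition gf :: "nat \<Rightarrow> nat \<Rightarrow> nat \<Rightarrow> nat \<Rightarrow> (nat \<Rightarrow> nat \<Rightarrow> nat \<Rightarrow> nat \<Rightarrow> real) \<Rightarrow> (nat \<Rightarrow> nat \<Rightarrow> real)
    \<Rightarrow> (nat \<Rightarrow> nat \<Rightarrow> real) \<Rightarrow> (nat \<Rightarrow> nat \<Rightarrow> real) \<Rightarrow> (nat \<Rightarrow> nat \<Rightarrow> real) \<Rightarrow> real" where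
  "gf p q r s Q c d x y =
     (\<Sum>i\<in>{1..p}. \<Sum>j\<in>{1..q}. \<Sum>k\<in>{1..r}. \<Sum>l\<in>{1..s}. Q i j k l * x i j * y k l)
     + (\<Sum>i\<in>{1..p}. \<Sum>j\<in>{1..q}. c i j * x i j)
     + (\<Sum>k\<in>{1..r}. \<Sum>l\<in>{1..s}. d k l * y k l)"

lemma cp_sum: "(\<Sum>t\<in>A\<times>B. f (fst t) (snd t)) = (\<Sum>a\<in>A. \<Sum>b\<in>B. f a b)"
  by (simp add: sum.cartesian_product split_def)

lemma prod_sum3: fixes Kc :: real shows "(\<Sum>t\<in>A\<times>B. Kc * u (fst t) * v (snd t)) = Kc * (\<Sum>a\<in>A. u a) * (\<Sum>b\<in>B. v b)"
proof -
  have "(\<Sum>t\<in>A\<times>B. Kc * u (fst t) * v (snd t)) = (\<Sum>a\<in>A. \<Sum>b\<in>B. Kc * u a * v b)"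
    by (rule cp_sum)
  also have "\<dots> = (\<Sum>a\<in>A. Kc * (\<Sum>b\<in>B. u a * v b))"
    by (simp add: sum_distrib_left mult.assoc)
  also have "\<dots> = Kc * (\<Sum>a\<in>A. \<Sum>b\<in>B. u a * v b)"
    by (simp add: sum_distrib_left)
  also have "\<dots> = Kc * (\<Sum>a\<in>A. u a) * (\<Sum>b\<in>B. v b)"
    by (simp add: sum_product mult.assoc)
  finally show ?thesis .
qed

lemma prod_sum1: fixes Kc :: real shows "(\<Sum>t\<in>A\<times>B. Kc * u (fst t)) = real (card B) * (Kc * (\<Sum>a\<in>A. u a))"
proof -
  have "(\<Sum>t\<in>A\<times>B. Kc * u (fst t)) = (\<Sum>a\<in>A. \<Sum>b\<in>B. Kc * u a)"
    by (rule cp_sum[where f = "\<lambda>a b. Kc * u a"])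
  also have "\<dots> = real (card B) * (Kc * (\<Sum>a\<in>A. u a))"
    by (simp add: sum_distrib_left)
  finally show ?thesis .
qed

lemma prod_sum2: fixes Kc :: real shows "(\<Sum>t\<in>A\<times>B. Kc * v (snd t)) = real (card A) * (Kc * (\<Sum>b\<in>B. v b))"
proof -
  have "(\<Sum>t\<in>A\<times>B. Kc * v (snd t)) = (\<Sum>a\<in>A. \<Sum>b\<in>B. Kc * v b)"
    by (rule cp_sum[where f = "\<lambda>a b. Kc * v b"])
  also have "\<dots> = real (card A) * (Kc * (\<Sum>b\<in>B. v b))"
    by (simp add: sum_distrib_left)
  finally show ?thesis .
qed

lemma rowsum: assumes q: "q \<ge> 1" and x: "x \<in> row_assign p q" and i: "i \<in> {1..p}" and j: "j \<in> {1..q}"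
  shows "(\<Sum>a\<in>{0..<q}. x i (sh q a j)) = 1"
  using sum.reindex_bij_betw[OF sh_bij2[OF q j], of "x i"] x i unfolding row_assign_def by simp

lemma colsum: assumes r: "r \<ge> 1" and y: "y \<in> col_assign r s" and k: "k \<in> {1..r}" and l: "l \<in> {1..s}"
  shows "(\<Sum>b\<in>{0..<r}. y (sh r b k) l) = 1"
  using sum.reindex_bij_betw[OF sh_bij2[OF r k], of "\<lambda>k. y k l"] y l unfolding col_assign_def by simp

lemma orbit:
  assumes q: "q \<ge> 1" and r: "r \<ge> 1" and x: "x \<in> row_assign p q" and y: "y \<in> col_assign r s"
  shows "(\<Sum>t\<in>{0..<q}\<times>{0..<r}. gf p q r s Q c d (Sx q (fst t) x) (Sy r (snd t) y))
    = (\<Sum>i\<in>{1..p}. \<Sum>j\<in>{1..q}. \<Sum>k\<in>{1..r}. \<Sum>l\<in>{1..s}. Q i j k l)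
     + (\<Sum>i\<in>{1..p}. \<Sum>j\<in>{1..q}. real r * c i j)
     + (\<Sum>k\<in>{1..r}. \<Sum>l\<in>{1..s}. real q * d k l)"
proof -
  let ?T = "{0..<q}\<times>{0..<r}"
  have "(\<Sum>t\<in>?T. gf p q r s Q c d (Sx q (fst t) x) (Sy r (snd t) y))
    = (\<Sum>t\<in>?T. \<Sum>i\<in>{1..p}. \<Sum>j\<in>{1..q}. \<Sum>k\<in>{1..r}. \<Sum>l\<in>{1..s}. Q i j k l * x i (sh q (fst t) j) * y (sh r (snd t) k) l)
     + (\<Sum>t\<in>?T. \<Sum>i\<in>{1..p}. \<Sum>j\<in>{1..q}. c i j * x i (sh q (fst t) j))
     + (\<Sum>t\<in>?T. \<Sum>k\<in>{1..r}. \<Sum>l\<in>{1..s}. d k l * y (sh r (snd t) k) l)"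
    by (simp only: gf_def Sx_def Sy_def sum.distrib)
  also have "(\<Sum>t\<in>?T. \<Sum>i\<in>{1..p}. \<Sum>j\<in>{1..q}. \<Sum>k\<in>{1..r}. \<Sum>l\<in>{1..s}. Q i j k l * x i (sh q (fst t) j) * y (sh r (snd t) k) l)
     = (\<Sum>i\<in>{1..p}. \<Sum>j\<in>{1..q}. \<Sum>k\<in>{1..r}. \<Sum>l\<in>{1..s}. \<Sum>t\<in>?T. Q i j k l * x i (sh q (fst t) j) * y (sh r (snd t) k) l)"
    by (simp only: sum.swap[where A = ?T])
  also have "\<dots> = (\<Sum>i\<in>{1..p}. \<Sum>j\<in>{1..q}. \<Sum>k\<in>{1..r}. \<Sum>l\<in>{1..s}. Q i j k l)"
  proof (intro sum.cong refl)
    fix i j k l assume i: "i \<in> {1..p}" and j: "j \<in> {1..q}" and k: "k \<in> {1..r}" and l: "l \<in> {1..s}"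
    show "(\<Sum>t\<in>?T. Q i j k l * x i (sh q (fst t) j) * y (sh r (snd t) k) l) = Q i j k l"
      using prod_sum3[where Kc = "Q i j k l" and u = "\<lambda>a. x i (sh q a j)" and A = "{0..<q}"
          and v = "\<lambda>b. y (sh r b k) l" and B = "{0..<r}"]
        rowsum[OF q x i j] colsum[OF r y k l] by simp
  qed
  also have "(\<Sum>t\<in>?T. \<Sum>i\<in>{1..p}. \<Sum>j\<in>{1..q}. c i j * x i (sh q (fst t) j))
     = (\<Sum>i\<in>{1..p}. \<Sum>j\<in>{1..q}. \<Sum>t\<in>?T. c i j * x i (sh q (fst t) j))"
    by (simp only: sum.swap[where A = ?T])
  also have "\<dots> = (\<Sum>i\<in>{1..p}. \<Sum>j\<in>{1..q}. real r * c i j)"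
  proof (intro sum.cong refl)
    fix i j assume i: "i \<in> {1..p}" and j: "j \<in> {1..q}"
    show "(\<Sum>t\<in>?T. c i j * x i (sh q (fst t) j)) = real r * c i j"
      using prod_sum1[where Kc = "c i j" and u = "\<lambda>a. x i (sh q a j)" and A = "{0..<q}" and B = "{0..<r}"]
        rowsum[OF q x i j] by simp
  qed
  also have "(\<Sum>t\<in>?T. \<Sum>k\<in>{1..r}. \<Sum>l\<in>{1..s}. d k l * y (sh r (snd t) k) l)
     = (\<Sum>k\<in>{1..r}. \<Sum>l\<in>{1..s}. \<Sum>t\<in>?T. d k l * y (sh r (snd t) k) l)"
    by (simp only: sum.swap[where A = ?T])
  also have "\<dots> = (\<Sum>k\<in>{1..r}. \<Sum>l\<in>{1..s}. real q * d k l)"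
  proof (intro sum.cong refl)
    fix k l assume k: "k \<in> {1..r}" and l: "l \<in> {1..s}"
    show "(\<Sum>t\<in>?T. d k l * y (sh r (snd t) k) l) = real q * d k l"
      using prod_sum2[where Kc = "d k l" and v = "\<lambda>b. y (sh r b k) l" and A = "{0..<q}" and B = "{0..<r}"]
        colsum[OF r y k l] by simp
  qed
  finally show ?thesis .
qed

lemma generic:
  assumes p: "p \<ge> 1" and q: "q \<ge> 1" and r: "r \<ge> 1" and s: "s \<ge> 1"
  shows "q ^ (p - 1) * r ^ (s - 1) \<le> card {(x, y) \<in> row_assign p q \<times> col_assign r s.
     gf p q r s Q c d x y \<ge> (\<Sum>(x, y)\<in>row_assign p q \<times> col_assign r s. gf p q r s Q c d x y) / real (card (row_assign p q \<times> col_assign r s))}"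
proof -
  let ?F = "row_assign p q \<times> col_assign r s"
  let ?T = "{0..<q}\<times>{0..<r}"
  let ?h = "\<lambda>(x, y). gf p q r s Q c d x y"
  let ?\<phi> = "\<lambda>t. map_prod (Sx q (fst t)) (Sy r (snd t))"
  have fF: "finite ?F" using finite_row finite_col by simp
  have cF: "q ^ p * r ^ s \<le> card ?F"
    using card_row[OF q, of p] card_col[OF r, of s] by (simp add: card_cartesian_product mult_le_mono)
  have neF: "?F \<noteq> {}" using cF q r by (auto simp: card_gt_0_iff)
  have key: "card ?F \<le> card ?T * card {z\<in>?F. ?h z \<ge> (\<Sum>z\<in>?F. ?h z) / card ?F}"
  proof (rule abstract_count[where \<phi> = ?\<phi>])
    show "finite ?F" by (rule fF)
    show "?F \<noteq> {}" by (rule neF)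
    show "finite ?T" by simp
    show "?T \<noteq> {}" using q r by auto
    show "bij_betw (?\<phi> t) ?F ?F" if "t \<in> ?T" for t
      by (rule bij_betw_map_prod[OF Sx_bij[OF q] Sy_bij[OF r]])
    show "(\<Sum>t\<in>?T. ?h (?\<phi> t z)) = (\<Sum>i\<in>{1..p}. \<Sum>j\<in>{1..q}. \<Sum>k\<in>{1..r}. \<Sum>l\<in>{1..s}. Q i j k l)
     + (\<Sum>i\<in>{1..p}. \<Sum>j\<in>{1..q}. real r * c i j)
     + (\<Sum>k\<in>{1..r}. \<Sum>l\<in>{1..s}. real q * d k l)" if "z \<in> ?F" for z
      using that orbit[OF q r, of "fst z" p "snd z" s Q c d] by (cases z) simp
  qed
  have eqset: "{z\<in>?F. ?h z \<ge> (\<Sum>z\<in>?F. ?h z) / card ?F} = {(x, y) \<in> ?F.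
     gf p q r s Q c d x y \<ge> (\<Sum>(x, y)\<in>?F. gf p q r s Q c d x y) / real (card ?F)}" by auto
  have cT: "card ?T = q * r" by simp
  have "(q * r) * (q ^ (p - 1) * r ^ (s - 1)) = q ^ p * r ^ s"
    using p s by (cases p; cases s) (simp_all add: algebra_simps)
  hence "(q * r) * (q ^ (p - 1) * r ^ (s - 1)) \<le> (q * r) * card {(x, y) \<in> ?F.
     gf p q r s Q c d x y \<ge> (\<Sum>(x, y)\<in>?F. gf p q r s Q c d x y) / real (card ?F)}"
    using cF key eqset cT by simp
  thus ?thesis using q r by simp
qed


theorem theorem2:
  fixes m n :: nat
  assumes "m \<ge> 1" and "n \<ge> 1"
  shows "(\<forall>Q c d. card {(x, y) \<in> feas1 m n. f1 m n Q c d x y \<ge> A1 m n Q c d}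
                    \<ge> n ^ (m - 1) * m ^ (n - 1))
       \<and> (\<forall>Q c d. card {(x, y) \<in> feas2 m n. f2 m n Q c d x y \<ge> A2 m n Q c d}
                    \<ge> m ^ (m - 1) * n ^ (n - 1))"
proof (intro conjI allI)
  fix Q c d
  have e: "f1 m n Q c d x y = gf m n m n Q c d x y" for x y
    unfolding f1_def gf_def by (simp only: sum.swap[where A = "{1..n}" and B = "{1..m}"])
  show "n ^ (m - 1) * m ^ (n - 1) \<le> card {(x, y) \<in> feas1 m n. f1 m n Q c d x y \<ge> A1 m n Q c d}"
    using generic[OF assms(1) assms(2) assms(1) assms(2), of Q c d]
    by (simp add: e A1_def feas1_def)
next
  fix Q c d
  have e: "f2 m n Q c d x y = gf m m n n Q c d x y" for x y
    unfolding f2_def gf_def by simp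
  show "m ^ (m - 1) * n ^ (n - 1) \<le> card {(x, y) \<in> feas2 m n. f2 m n Q c d x y \<ge> A2 m n Q c d}"
    using generic[OF assms(1) assms(1) assms(2) assms(2), of Q c d]
    by (simp add: e A2_def feas2_def)
qed

end
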